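(* Every $5$-dimensional Acaa-algebra over a field $\mathbb K$ of characteristic $0$ is isomorphic to one of the following algebras, each given in a basis $\{e_1,\dots,e_5\}$ with all brackets of basis vectors not listed (and not determined by anticommutativity) equal to zero: (1) the $5$-dimensional abelian algebra; (2) $\mathcal H_3\oplus\mathbb K^2$: $[e_1,e_2]=e_3$; (3) the $2$-step nilpotent Lie algebra $[e_1,e_2]=e_3$, $[e_1,e_4]=e_5$; (4) the $5$-dimensional Heisenberg Lie algebra $\mathcal H_5$: $[e_1,e_2]=e_5$, $[e_3,e_4]=e_5$.
   Context: An Acaa-algebra over a field $\mathbb K$ of characteristic $0$ is a $\mathbb K$-vector space $A$ with a bilinear product $[\cdot,\cdot]$ which is anticommutative, $[x,y]=-[y,x]$, and satisfies $[x_1,[x_2,x_3]]=[x_2,[x_3,x_1]]$ for all $x_1,x_2,x_3\in A$. Isomorphism means a linear bijection preserving the bracket. *)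

theory Defs
  imports Complex_Main "HOL-Library.Function_Algebras"
begin

definition acaa_algebra ::
  "('k::field \<Rightarrow> 'v::ab_group_add \<Rightarrow> 'v) \<Rightarrow> ('v \<Rightarrow> 'v \<Rightarrow> 'v) \<Rightarrow> bool" where
  "acaa_algebra sc br \<longleftrightarrow>
     vector_space sc \<and>
     (\<forall>x. Vector_Spaces.linear sc sc (br x)) \<and>
     (\<forall>y. Vector_Spaces.linear sc sc (\<lambda>x. br x y)) \<and>
     (\<forall>x y. br x y = - br y x) \<and>
     (\<forall>x1 x2 x3. br x1 (br x2 x3) = br x2 (br x3 x1))"

definition alg_isomorphic ::
  "('k::field \<Rightarrow> 'v::ab_group_add \<Rightarrow> 'v) \<Rightarrow> ('v \<Rightarrow> 'v \<Rightarrow> 'v) \<Rightarrow>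
   ('k \<Rightarrow> 'w::ab_group_add \<Rightarrow> 'w) \<Rightarrow> ('w \<Rightarrow> 'w \<Rightarrow> 'w) \<Rightarrow> bool" where
  "alg_isomorphic sc1 br1 sc2 br2 \<longleftrightarrow>
     (\<exists>f. Vector_Spaces.linear sc1 sc2 f \<and> bij f \<and>
          (\<forall>x y. f (br1 x y) = br2 (f x) (f y)))"

text \<open>Model algebras on K^5 = (idx5 \<Rightarrow> 'k) with standard basis e_1..e_5
(e_i = indicator of Ei); the brackets are the bilinear extensions of the
listed brackets of basis vectors.\<close>

datatype idx5 = E1 | E2 | E3 | E4 | E5

definition sc5 :: "'k::field \<Rightarrow> (idx5 \<Rightarrow> 'k) \<Rightarrow> (idx5 \<Rightarrow> 'k)" where
  "sc5 c x = (\<lambda>i. c * x i)"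

definition br_abelian :: "(idx5 \<Rightarrow> 'k::field) \<Rightarrow> (idx5 \<Rightarrow> 'k) \<Rightarrow> (idx5 \<Rightarrow> 'k)" where
  "br_abelian x y = (\<lambda>k. 0)"

definition br_H3K2 :: "(idx5 \<Rightarrow> 'k::field) \<Rightarrow> (idx5 \<Rightarrow> 'k) \<Rightarrow> (idx5 \<Rightarrow> 'k)" where
  "br_H3K2 x y = (\<lambda>k. if k = E3 then x E1 * y E2 - x E2 * y E1 else 0)"

definition br_L52 :: "(idx5 \<Rightarrow> 'k::field) \<Rightarrow> (idx5 \<Rightarrow> 'k) \<Rightarrow> (idx5 \<Rightarrow> 'k)" where
  "br_L52 x y = (\<lambda>k. if k = E3 then x E1 * y E2 - x E2 * y E1
                     else if k = E5 then x E1 * y E4 - x E4 * y E1 else 0)"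

definition br_H5 :: "(idx5 \<Rightarrow> 'k::field) \<Rightarrow> (idx5 \<Rightarrow> 'k) \<Rightarrow> (idx5 \<Rightarrow> 'k)" where
  "br_H5 x y = (\<lambda>k. if k = E5 then x E1 * y E2 - x E2 * y E1 + x E3 * y E4 - x E4 * y E3
                     else 0)"

end

theory Submission
  imports Defs
begin

locale acaa = vector_space scale
  for scale :: "'k::field_char_0 \<Rightarrow> 'v::ab_group_add \<Rightarrow> 'v" (infixr \<open>*s\<close> 75) +
  fixes br :: "'v \<Rightarrow> 'v \<Rightarrow> 'v"
  assumes addR: "br x (y + z) = br x y + br x z"
    and sclR: "br x (a *s y) = a *s br x y"
    and anti: "br x y = - br y x"
    and cyc: "br x1 (br x2 x3) = br x2 (br x3 x1)"
begin

lemma addL: "br (y + z) x = br y x + br z x"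
  by (metis addR anti minus_add_distrib)
lemma sclL: "br (a *s y) x = a *s br y x"
  by (metis anti sclR scale_minus_right)
lemma zeroR[simp]: "br x 0 = 0"
  by (metis addR add_cancel_right_right)
lemma zeroL[simp]: "br 0 x = 0"
  by (metis addL add_cancel_right_right)
lemma negR: "br x (- y) = - br x y"
  by (metis addR add.right_inverse zeroR add_eq_0_iff)
lemma negL: "br (- y) x = - br y x"
  by (metis addL add.right_inverse zeroL add_eq_0_iff)
lemma diffR: "br x (y - z) = br x y - br x z"
  by (metis addR negR diff_conv_add_uminus)
lemma diffL: "br (y - z) x = br y x - br z x"
  by (metis addL negL diff_conv_add_uminus)

lemmas bsimps = addR addL sclR sclL negR negL diffR diffL

lemma two_zero: assumes "x = - (x::'v)" shows "x = 0"
proof -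
  have "x + x = 0" using assms by (metis add.right_inverse)
  hence "(1/2::'k) *s (x + x) = 0" by simp
  hence "((1/2::'k) + 1/2) *s x = 0" by (simp only: scale_left_distrib scale_right_distrib)
  thus ?thesis by simp
qed

lemma bxx[simp]: "br x x = 0"
  using anti two_zero by blast

lemma K: "br x (br y w) = br w (br x y)"
  by (metis cyc)

lemma T1[simp]: "br x (br x z) = 0"
proof -
  have "br x (br x z) = br x (br z x)" using cyc by metis
  also have "\<dots> = - br x (br x z)" by (metis anti negR)
  finally show ?thesis using two_zero by blast
qed
lemma T2[simp]: "br x (br y x) = 0"
  by (metis T1 anti negR neg_equal_0_iff_equal)

lemma Q[simp]: "br (br c d) (br a b) = 0"
proof -
  have "br (br c d) (br a b) = - br (br c d) (br b a)" by (metis anti negR)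
  also have "\<dots> = - br b (br a (br c d))" by (metis K)
  also have "\<dots> = - br b (br c (br d a))" by (metis cyc)
  also have "\<dots> = - br (br d a) (br b c)" by (metis K)
  also have "\<dots> = br (br d a) (br c b)" by (metis anti negR minus_minus)
  also have "\<dots> = br c (br b (br d a))" by (metis K)
  also have "\<dots> = br c (br d (br a b))" by (metis cyc)
  also have "\<dots> = br (br a b) (br c d)" by (metis K)
  also have "\<dots> = - br (br c d) (br a b)" by (metis anti)
  finally show ?thesis using two_zero by blast
qed

lemma four[simp]: "br x (br y (br z w)) = 0"
  by (metis K Q)

end

context acaa begin

definition indepv :: "nat \<Rightarrow> (nat \<Rightarrow> 'v) \<Rightarrow> bool" where
  "indepv n v \<longleftrightarrow> (\<forall>c. (\<Sum>i<n. c i *s v i) = 0 \<longrightarrow> (\<forall>i<n. c i = 0))"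

lemma indep_inj: fixes v :: "nat \<Rightarrow> 'v" assumes "indepv n v" shows "inj_on v {..<n}"
proof (rule inj_onI, rule ccontr)
  fix i j assume ij: "i \<in> {..<n}" "j \<in> {..<n}" "v i = v j" "i \<noteq> j"
  define c where "c = (\<lambda>k. if k = i then 1 else if k = j then - 1 else (0::'k))"
  have "(\<Sum>k<n. c k *s v k) = (\<Sum>k\<in>{i,j}. c k *s v k)"
    by (rule sum.mono_neutral_right) (use ij in \<open>auto simp: c_def\<close>)
  also have "\<dots> = 0" using ij by (simp add: c_def)
  finally have "c i = 0" using assms ij unfolding indepv_def by blast
  thus False by (simp add: c_def)
qed

lemma indep_independent: fixes v :: "nat \<Rightarrow> 'v" assumes "indepv n v" shows "independent (v ` {..<n})"
proof (rule independent_if_scalars_zero)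
  show "finite (v ` {..<n})" by simp
  fix f x assume s: "(\<Sum>x\<in>v ` {..<n}. f x *s x) = 0" and x: "x \<in> v ` {..<n}"
  have "(\<Sum>i<n. f (v i) *s v i) = 0" using s by (simp add: sum.reindex[OF indep_inj[OF assms]])
  hence "\<forall>i<n. f (v i) = 0" using assms[unfolded indepv_def, rule_format, of "\<lambda>i. f (v i)"] by blast
  thus "f x = 0" using x by auto
qed

lemma in_span_iff: fixes v :: "nat \<Rightarrow> 'v" assumes "inj_on v {..<n}"
  shows "w \<in> span (v ` {..<n}) \<longleftrightarrow> (\<exists>c. w = (\<Sum>i<n. c i *s v i))"
proof
  assume "w \<in> span (v ` {..<n})"
  then obtain u where "w = (\<Sum>x\<in>v ` {..<n}. u x *s x)" by (auto simp: span_finite)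
  hence "w = (\<Sum>i<n. u (v i) *s v i)" by (simp add: sum.reindex[OF assms])
  thus "\<exists>c. w = (\<Sum>i<n. c i *s v i)" by (rule exI[of _ "\<lambda>i. u (v i)"])
next
  assume "\<exists>c. w = (\<Sum>i<n. c i *s v i)"
  then obtain c where "w = (\<Sum>i<n. c i *s v i)" by blast
  moreover have "(\<Sum>i<n. c i *s v i) \<in> span (v ` {..<n})" by (intro span_sum span_scale span_base) auto
  ultimately show "w \<in> span (v ` {..<n})" by simp
qed

lemma indep_extend: fixes v :: "nat \<Rightarrow> 'v" assumes "indepv n v" "w \<notin> span (v ` {..<n})"
  shows "indepv (Suc n) (v(n := w))"
  unfolding indepv_def
proof (rule allI, rule impI)
  fix c assume "(\<Sum>i<Suc n. c i *s (v(n := w)) i) = 0"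
  hence s: "(\<Sum>i<n. c i *s v i) + c n *s w = 0" by simp
  have cn: "c n = 0"
  proof (rule ccontr)
    assume h: "c n \<noteq> 0"
    have "w = (\<Sum>i<n. (- c i / c n) *s v i)"
    proof -
      have "c n *s w = - (\<Sum>i<n. c i *s v i)" using s by (simp add: eq_neg_iff_add_eq_0 add.commute)
      hence "(1 / c n) *s (c n *s w) = (1 / c n) *s (- (\<Sum>i<n. c i *s v i))" by simp
      hence "w = - (\<Sum>i<n. (1 / c n) *s (c i *s v i))" using h by (simp add: scale_sum_right)
      also have "\<dots> = (\<Sum>i<n. (- c i / c n) *s v i)"
        by (simp add: sum_negf[symmetric])
      finally show ?thesis .
    qed
    moreover have "(\<Sum>i<n. (- c i / c n) *s v i) \<in> span (v ` {..<n})" by (intro span_sum span_scale span_base) auto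
    ultimately have "w \<in> span (v ` {..<n})" by simp
    thus False using assms(2) by blast
  qed
  hence "(\<Sum>i<n. c i *s v i) = 0" using s by simp
  hence "\<forall>i<n. c i = 0" using assms(1)[unfolded indepv_def, rule_format, of c] by blast
  thus "\<forall>i<Suc n. c i = 0" using cn by (auto simp: less_Suc_eq)
qed

lemma indep_le_dim: fixes v :: "nat \<Rightarrow> 'v" assumes "indepv n v" "dim (UNIV::'v set) = m" "m > 0" shows "n \<le> m"
proof -
  obtain B where B: "independent B" "UNIV \<subseteq> span B" "card B = dim (UNIV::'v set)"
    using basis_exists by blast
  have fB: "finite B" proof (rule ccontr) assume "infinite B" thus False using B assms by simp qed
  have "card (v ` {..<n}) \<le> card B"
    using independent_span_bound[OF fB indep_independent[OF assms(1)]] B by auto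
  moreover have "card (v ` {..<n}) = n" using card_image[OF indep_inj[OF assms(1)]] by simp
  ultimately show ?thesis using B assms by simp
qed

lemma indep_span_all: fixes v :: "nat \<Rightarrow> 'v" assumes "indepv m v" "dim (UNIV::'v set) = m" "m > 0"
  shows "\<exists>c. w = (\<Sum>i<m. c i *s v i)"
proof -
  have "w \<in> span (v ` {..<m})"
  proof (rule ccontr)
    assume "w \<notin> span (v ` {..<m})"
    from indep_le_dim[OF indep_extend[OF assms(1) this] assms(2,3)] show False by simp
  qed
  thus ?thesis using in_span_iff[OF indep_inj[OF assms(1)]] by blast
qed

lemma indep_grow: fixes v :: "nat \<Rightarrow> 'v" assumes "indepv n v" "dim (UNIV::'v set) = m" "n < m"
  shows "\<exists>w. indepv (Suc n) (v(n := w))"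
proof -
  have "\<exists>w. w \<notin> span (v ` {..<n})"
  proof (rule ccontr)
    assume "\<not> ?thesis"
    hence "UNIV \<subseteq> span (v ` {..<n})" by blast
    hence "dim (UNIV::'v set) \<le> card (v ` {..<n})" by (intro dim_le_card) auto
    also have "\<dots> \<le> n" using card_image_le[of "{..<n}" v] by simp
    finally show False using assms by simp
  qed
  thus ?thesis using indep_extend[OF assms(1)] by blast
qed

end

context acaa begin

lemma indepv_cong: assumes "\<And>i. i < n \<Longrightarrow> v i = v' i" shows "indepv n v = indepv n v'"
proof -
  have "\<And>c. (\<Sum>i<n. c i *s v i) = (\<Sum>i<n. c i *s v' i)" by (rule sum.cong) (auto simp: assms)
  thus ?thesis unfolding indepv_def by simp
qed

lemma less5: "(i::nat) < 5 \<longleftrightarrow> i = 0 \<or> i = 1 \<or> i = 2 \<or> i = 3 \<or> i = 4" by auto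
lemma less6: "(i::nat) < 6 \<longleftrightarrow> i = 0 \<or> i = 1 \<or> i = 2 \<or> i = 3 \<or> i = 4 \<or> i = 5" by auto
lemma less3: "(i::nat) < 3 \<longleftrightarrow> i = 0 \<or> i = 1 \<or> i = 2" by auto

lemma indep3_iff: "indepv 3 (nth [v1,v2,v3]) \<longleftrightarrow>
  (\<forall>a b c. a*s v1 + b*s v2 + c*s v3 = 0 \<longrightarrow> a=0 \<and> b=0 \<and> c=0)"
proof
  assume h: "indepv 3 (nth [v1,v2,v3])"
  show "\<forall>a b c. a*s v1 + b*s v2 + c*s v3 = 0 \<longrightarrow> a=0 \<and> b=0 \<and> c=0"
  proof (intro allI impI)
    fix a b c assume "a*s v1 + b*s v2 + c*s v3 = 0"
    hence "(\<Sum>i<3. (nth [a,b,c]) i *s (nth [v1,v2,v3]) i) = 0"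
      by (simp add: numeral_eq_Suc add.assoc)
    note H = h[unfolded indepv_def, rule_format, OF this]
    show "a=0 \<and> b=0 \<and> c=0" using H[of 0] H[of 1] H[of 2] by simp
  qed
next
  assume h: "\<forall>a b c. a*s v1 + b*s v2 + c*s v3 = 0 \<longrightarrow> a=0 \<and> b=0 \<and> c=0"
  show "indepv 3 (nth [v1,v2,v3])" unfolding indepv_def
  proof (rule allI, rule impI)
    fix c assume "(\<Sum>i<3. c i *s [v1,v2,v3] ! i) = 0"
    hence "c 0 *s v1 + c 1 *s v2 + c 2 *s v3 = 0" by (simp add: numeral_eq_Suc add.assoc)
    note H = h[rule_format, OF this]
    show "\<forall>i<3. c i = 0" using H unfolding less3 by auto
  qed
qed

lemma indep5_iff: "indepv 5 (nth [v1,v2,v3,v4,v5]) \<longleftrightarrow>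
  (\<forall>a b c d e. a*s v1 + b*s v2 + c*s v3 + d*s v4 + e*s v5 = 0 \<longrightarrow> a=0 \<and> b=0 \<and> c=0 \<and> d=0 \<and> e=0)"
proof
  assume h: "indepv 5 (nth [v1,v2,v3,v4,v5])"
  show "\<forall>a b c d e. a*s v1 + b*s v2 + c*s v3 + d*s v4 + e*s v5 = 0 \<longrightarrow> a=0 \<and> b=0 \<and> c=0 \<and> d=0 \<and> e=0"
  proof (intro allI impI)
    fix a b c d e assume "a*s v1 + b*s v2 + c*s v3 + d*s v4 + e*s v5 = 0"
    hence "(\<Sum>i<5. (nth [a,b,c,d,e]) i *s (nth [v1,v2,v3,v4,v5]) i) = 0"
      by (simp add: numeral_eq_Suc add.assoc)
    note H = h[unfolded indepv_def, rule_format, OF this]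
    show "a=0 \<and> b=0 \<and> c=0 \<and> d=0 \<and> e=0" using H[of 0] H[of 1] H[of 2] H[of 3] H[of 4] by simp
  qed
next
  assume h: "\<forall>a b c d e. a*s v1 + b*s v2 + c*s v3 + d*s v4 + e*s v5 = 0 \<longrightarrow> a=0 \<and> b=0 \<and> c=0 \<and> d=0 \<and> e=0"
  show "indepv 5 (nth [v1,v2,v3,v4,v5])" unfolding indepv_def
  proof (rule allI, rule impI)
    fix c assume "(\<Sum>i<5. c i *s [v1,v2,v3,v4,v5] ! i) = 0"
    hence "c 0 *s v1 + c 1 *s v2 + c 2 *s v3 + c 3 *s v4 + c 4 *s v5 = 0" by (simp add: numeral_eq_Suc add.assoc)
    note H = h[rule_format, OF this]
    show "\<forall>i<5. c i = 0" using H unfolding less5 by auto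
  qed
qed

lemma indep6_iff: "indepv 6 (nth [v1,v2,v3,v4,v5,v6]) \<longleftrightarrow>
  (\<forall>a b c d e f. a*s v1 + b*s v2 + c*s v3 + d*s v4 + e*s v5 + f*s v6 = 0 \<longrightarrow> a=0 \<and> b=0 \<and> c=0 \<and> d=0 \<and> e=0 \<and> f=0)"
proof
  assume h: "indepv 6 (nth [v1,v2,v3,v4,v5,v6])"
  show "\<forall>a b c d e f. a*s v1 + b*s v2 + c*s v3 + d*s v4 + e*s v5 + f*s v6 = 0 \<longrightarrow> a=0 \<and> b=0 \<and> c=0 \<and> d=0 \<and> e=0 \<and> f=0"
  proof (intro allI impI)
    fix a b c d e f assume "a*s v1 + b*s v2 + c*s v3 + d*s v4 + e*s v5 + f*s v6 = 0"
    hence "(\<Sum>i<6. (nth [a,b,c,d,e,f]) i *s (nth [v1,v2,v3,v4,v5,v6]) i) = 0"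
      by (simp add: numeral_eq_Suc add.assoc)
    note H = h[unfolded indepv_def, rule_format, OF this]
    show "a=0 \<and> b=0 \<and> c=0 \<and> d=0 \<and> e=0 \<and> f=0" using H[of 0] H[of 1] H[of 2] H[of 3] H[of 4] H[of 5] by simp
  qed
next
  assume h: "\<forall>a b c d e f. a*s v1 + b*s v2 + c*s v3 + d*s v4 + e*s v5 + f*s v6 = 0 \<longrightarrow> a=0 \<and> b=0 \<and> c=0 \<and> d=0 \<and> e=0 \<and> f=0"
  show "indepv 6 (nth [v1,v2,v3,v4,v5,v6])" unfolding indepv_def
  proof (rule allI, rule impI)
    fix c assume "(\<Sum>i<6. c i *s [v1,v2,v3,v4,v5,v6] ! i) = 0"
    hence "c 0 *s v1 + c 1 *s v2 + c 2 *s v3 + c 3 *s v4 + c 4 *s v5 + c 5 *s v6 = 0" by (simp add: numeral_eq_Suc add.assoc)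
    note H = h[rule_format, OF this]
    show "\<forall>i<6. c i = 0" using H unfolding less6 by auto
  qed
qed

lemma grow_list: assumes "indepv (length L) (nth L)" "dim (UNIV::'v set) = m" "length L < m"
  shows "\<exists>w. indepv (Suc (length L)) (nth (L @ [w]))"
proof -
  obtain w where "indepv (Suc (length L)) ((nth L)(length L := w))"
    using indep_grow[OF assms] by blast
  moreover have "indepv (Suc (length L)) ((nth L)(length L := w)) = indepv (Suc (length L)) (nth (L @ [w]))"
    by (rule indepv_cong) (auto simp: nth_append less_Suc_eq)
  ultimately show ?thesis by blast
qed

end

locale acaa5 = acaa scale br
  for scale :: "'k::field_char_0 \<Rightarrow> 'v::ab_group_add \<Rightarrow> 'v" (infixr \<open>*s\<close> 75)
  and br :: "'v \<Rightarrow> 'v \<Rightarrow> 'v" +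
  assumes dim5: "dim (UNIV::'v set) = 5"
begin

lemma six_false: "indepv 6 (nth [v1,v2,v3,v4,v5,v6]) \<Longrightarrow> False"
  using indep_le_dim[OF _ dim5] by fastforce

lemma span5: "indepv 5 (nth [v1,v2,v3,v4,v5]) \<Longrightarrow>
   \<exists>a b c d e. w = a*s v1 + b*s v2 + c*s v3 + d*s v4 + e*s v5"
proof -
  assume "indepv 5 (nth [v1,v2,v3,v4,v5])"
  from indep_span_all[OF this dim5] obtain c where "w = (\<Sum>i<5. c i *s [v1,v2,v3,v4,v5] ! i)" by auto
  hence "w = c 0 *s v1 + c 1 *s v2 + c 2 *s v3 + c 3 *s v4 + c 4 *s v5" by (simp add: numeral_eq_Suc add.assoc)
  thus ?thesis by blast
qed

lemma ext3: assumes "indepv 3 (nth [v1,v2,v3])"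
  shows "\<exists>w4 w5. indepv 5 (nth [v1,v2,v3,w4,w5])"
proof -
  have "indepv (length [v1,v2,v3]) (nth [v1,v2,v3])" using assms by (simp add: numeral_eq_Suc)
  from grow_list[OF this dim5] obtain w4 where
    "indepv (Suc (length [v1,v2,v3])) (nth ([v1,v2,v3] @ [w4]))" by auto
  hence "indepv (length [v1,v2,v3,w4]) (nth [v1,v2,v3,w4])" by (simp add: numeral_eq_Suc)
  from grow_list[OF this dim5] obtain w5 where
    "indepv (Suc (length [v1,v2,v3,w4])) (nth ([v1,v2,v3,w4] @ [w5]))" by auto
  hence "indepv 5 (nth [v1,v2,v3,w4,w5])" by (simp add: numeral_eq_Suc)
  thus ?thesis by blast
qed

lemma ext0: "\<exists>v1 v2 v3 v4 v5. indepv 5 (nth [v1,v2,v3,v4,v5])"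
proof -
  have "indepv (length []) (nth [])" unfolding indepv_def by (simp add: numeral_eq_Suc)
  from grow_list[OF this dim5] obtain a where "indepv (Suc (length [])) (nth ([] @ [a]))" by auto
  hence "indepv (length [a]) (nth [a])" by (simp add: numeral_eq_Suc)
  from grow_list[OF this dim5] obtain b where "indepv (Suc (length [a])) (nth ([a] @ [b]))" by auto
  hence "indepv (length [a,b]) (nth [a,b])" by (simp add: numeral_eq_Suc)
  from grow_list[OF this dim5] obtain c where "indepv (Suc (length [a,b])) (nth ([a,b] @ [c]))" by auto
  hence "indepv 3 (nth [a,b,c])" by (simp add: numeral_eq_Suc)
  thus ?thesis using ext3 by blast
qed

end

lemma UNIV_idx5: "(UNIV::idx5 set) = {E1,E2,E3,E4,E5}"
  by (auto intro: idx5.exhaust)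

lemma sum_idx5: "(\<Sum>k\<in>(UNIV::idx5 set). f k) = f E1 + f E2 + f E3 + f E4 + f E5"
  by (simp add: UNIV_idx5 add.assoc)

definition unitv :: "idx5 \<Rightarrow> idx5 \<Rightarrow> 'k::field" where
  "unitv i = (\<lambda>k. if k = i then 1 else 0)"

lemma vs_sc5: "vector_space (sc5 :: 'k::field \<Rightarrow> _ \<Rightarrow> _)"
  unfolding vector_space_def sc5_def by (auto simp: fun_eq_iff algebra_simps)

context acaa begin

lemma brsumL: "br (\<Sum>a\<in>A. f a) y = (\<Sum>a\<in>A. br (f a) y)"
  by (induct A rule: infinite_finite_induct) (simp_all add: addL)
lemma brsumR: "br y (\<Sum>a\<in>A. f a) = (\<Sum>a\<in>A. br y (f a))"
  by (induct A rule: infinite_finite_induct) (simp_all add: addR)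

end

context acaa5 begin

lemma iso_basis:
  fixes F :: "idx5 \<Rightarrow> 'v" and brM :: "(idx5 \<Rightarrow> 'k) \<Rightarrow> (idx5 \<Rightarrow> 'k) \<Rightarrow> (idx5 \<Rightarrow> 'k)"
  assumes ind: "indepv 5 (nth [F E1, F E2, F E3, F E4, F E5])"
  and bil: "\<And>x y k. brM x y k = (\<Sum>i\<in>UNIV. \<Sum>j\<in>UNIV. x i * y j * brM (unitv i) (unitv j) k)"
  and tab: "\<And>i j. br (F i) (F j) = (\<Sum>k\<in>UNIV. brM (unitv i) (unitv j) k *s F k)"
  shows "alg_isomorphic scale br sc5 brM"
proof -
  define g where "g c = (\<Sum>k\<in>UNIV. c k *s F k)" for c :: "idx5 \<Rightarrow> 'k"
  have g_add: "g (x + y) = g x + g y" for x y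
    unfolding g_def by (simp add: scale_left_distrib sum.distrib)
  have g_scale: "g (sc5 a x) = a *s g x" for a x
    unfolding g_def sc5_def by (simp add: scale_sum_right)
  have g_diff: "g (x - y) = g x - g y" for x y
    unfolding g_def by (simp add: scale_left_diff_distrib sum_subtractf)
  have inj: "inj g"
  proof (rule injI)
    fix x y assume "g x = g y"
    hence "g (x - y) = 0" by (simp add: g_diff)
    hence "(x - y) E1 *s F E1 + (x - y) E2 *s F E2 + (x - y) E3 *s F E3 + (x - y) E4 *s F E4 + (x - y) E5 *s F E5 = 0"
      unfolding g_def sum_idx5 .
    with ind[unfolded indep5_iff] have "(x - y) E1 = 0 \<and> (x - y) E2 = 0 \<and> (x - y) E3 = 0 \<and> (x - y) E4 = 0 \<and> (x - y) E5 = 0"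
      by blast
    thus "x = y" by (auto simp: fun_eq_iff intro: idx5.induct)
  qed
  have surj: "surj g"
    unfolding surj_def
  proof
    fix w
    obtain a b c d e where w: "w = a*s F E1 + b*s F E2 + c*s F E3 + d*s F E4 + e*s F E5"
      using span5[OF ind] by blast
    have "g (case_idx5 a b c d e) = w" unfolding g_def sum_idx5 w by simp
    thus "\<exists>c. w = g c" by metis
  qed
  have brg: "br (g x) (g y) = g (brM x y)" for x y
  proof -
    have s1: "br (g x) (g y) = (\<Sum>i\<in>UNIV. x i *s br (F i) (g y))"
      unfolding g_def[of x] by (simp add: brsumL sclL)
    have s2: "br (F i) (g y) = (\<Sum>j\<in>UNIV. y j *s br (F i) (F j))" for i
      unfolding g_def by (simp add: brsumR sclR)
    have "br (g x) (g y) = (\<Sum>i\<in>UNIV. \<Sum>j\<in>UNIV. \<Sum>k\<in>UNIV. (x i * y j * brM (unitv i) (unitv j) k) *s F k)"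
      unfolding s1 s2 tab by (simp add: scale_sum_right mult.assoc)
    also have "\<dots> = (\<Sum>i\<in>UNIV. \<Sum>k\<in>UNIV. \<Sum>j\<in>UNIV. (x i * y j * brM (unitv i) (unitv j) k) *s F k)"
      by (rule sum.cong[OF refl], rule sum.swap)
    also have "\<dots> = (\<Sum>k\<in>UNIV. \<Sum>i\<in>UNIV. \<Sum>j\<in>UNIV. (x i * y j * brM (unitv i) (unitv j) k) *s F k)"
      by (rule sum.swap)
    also have "\<dots> = g (brM x y)"
      unfolding g_def by (subst bil) (simp add: scale_sum_left)
    finally show ?thesis .
  qed
  have bij: "bij g" using inj surj by (simp add: bij_def)
  have gi: "g (inv g w) = w" for w using surj by (simp add: surj_f_inv_f)
  have ig: "inv g (g c) = c" for c using inj by (simp add: inv_f_f)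
  show ?thesis unfolding alg_isomorphic_def
  proof (intro exI conjI allI)
    show "bij (inv g)" using bij by (rule bij_imp_bij_inv)
    show "inv g (br x y) = brM (inv g x) (inv g y)" for x y
      by (metis brg gi ig)
    show "Vector_Spaces.linear scale sc5 (inv g)"
      unfolding Vector_Spaces.linear_iff
    proof (intro conjI allI)
      show "vector_space scale" by unfold_locales
      show "vector_space (sc5 :: 'k \<Rightarrow> _)" by (rule vs_sc5)
      show "inv g (x + y) = inv g x + inv g y" for x y
        by (metis g_add gi ig)
      show "inv g (c *s x) = sc5 c (inv g x)" for c x
        by (metis g_scale gi ig)
    qed
  qed
qed

end

context acaa5 begin

lemma iso_H5:
  assumes ind: "indepv 5 (nth [f1,f2,f3,f4,f5])"
  and h: "br f1 f2 = f5" "br f3 f4 = f5" "br f1 f3 = 0" "br f1 f4 = 0" "br f1 f5 = 0"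
     "br f2 f3 = 0" "br f2 f4 = 0" "br f2 f5 = 0" "br f3 f5 = 0" "br f4 f5 = 0"
  shows "alg_isomorphic scale br sc5 br_H5"
proof (rule iso_basis[where F = "case_idx5 f1 f2 f3 f4 f5"])
  show "indepv 5 (nth [case_idx5 f1 f2 f3 f4 f5 E1, case_idx5 f1 f2 f3 f4 f5 E2,
     case_idx5 f1 f2 f3 f4 f5 E3, case_idx5 f1 f2 f3 f4 f5 E4, case_idx5 f1 f2 f3 f4 f5 E5])"
    using ind by simp
  show "br_H5 x y k = (\<Sum>i\<in>UNIV. \<Sum>j\<in>UNIV. x i * y j * br_H5 (unitv i) (unitv j) k)" for x y k
    by (cases k) (simp_all add: sum_idx5 br_H5_def unitv_def algebra_simps)
  have r: "br f2 f1 = - f5" "br f4 f3 = - f5" "br f3 f1 = 0" "br f4 f1 = 0" "br f5 f1 = 0"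
     "br f3 f2 = 0" "br f4 f2 = 0" "br f5 f2 = 0" "br f5 f3 = 0" "br f5 f4 = 0"
    using h by (metis anti neg_0_equal_iff_equal minus_minus)+
  show "br (case_idx5 f1 f2 f3 f4 f5 i) (case_idx5 f1 f2 f3 f4 f5 j) =
    (\<Sum>k\<in>UNIV. br_H5 (unitv i) (unitv j) k *s case_idx5 f1 f2 f3 f4 f5 k)" for i j
    by (cases i; cases j) (simp_all add: sum_idx5 br_H5_def unitv_def h r)
qed

lemma iso_ab:
  assumes ind: "indepv 5 (nth [f1,f2,f3,f4,f5])"
  and h: "br f1 f2 = 0"
     "br f3 f4 = 0"
     "br f1 f3 = 0"
     "br f1 f4 = 0"
     "br f1 f5 = 0"
     "br f2 f3 = 0"
     "br f2 f4 = 0"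
     "br f2 f5 = 0"
     "br f3 f5 = 0"
     "br f4 f5 = 0"
  shows "alg_isomorphic scale br sc5 br_abelian"
proof (rule iso_basis[where F = "case_idx5 f1 f2 f3 f4 f5"])
  show "indepv 5 (nth [case_idx5 f1 f2 f3 f4 f5 E1, case_idx5 f1 f2 f3 f4 f5 E2,
     case_idx5 f1 f2 f3 f4 f5 E3, case_idx5 f1 f2 f3 f4 f5 E4, case_idx5 f1 f2 f3 f4 f5 E5])"
    using ind by simp
  show "br_abelian x y k = (\<Sum>i\<in>UNIV. \<Sum>j\<in>UNIV. x i * y j * br_abelian (unitv i) (unitv j) k)" for x y k
    by (cases k) (simp_all add: sum_idx5 br_abelian_def unitv_def algebra_simps)
  have r: "br f2 f1 = 0"
     "br f4 f3 = 0"
     "br f3 f1 = 0"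
     "br f4 f1 = 0"
     "br f5 f1 = 0"
     "br f3 f2 = 0"
     "br f4 f2 = 0"
     "br f5 f2 = 0"
     "br f5 f3 = 0"
     "br f5 f4 = 0"
    using h by (metis anti neg_0_equal_iff_equal minus_minus)+
  show "br (case_idx5 f1 f2 f3 f4 f5 i) (case_idx5 f1 f2 f3 f4 f5 j) =
    (\<Sum>k\<in>UNIV. br_abelian (unitv i) (unitv j) k *s case_idx5 f1 f2 f3 f4 f5 k)" for i j
    by (cases i; cases j) (simp_all add: sum_idx5 br_abelian_def unitv_def h r)
qed

lemma iso_H3K2:
  assumes ind: "indepv 5 (nth [f1,f2,f3,f4,f5])"
  and h: "br f1 f2 = f3"
     "br f3 f4 = 0"
     "br f1 f3 = 0"
     "br f1 f4 = 0"
     "br f1 f5 = 0"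
     "br f2 f3 = 0"
     "br f2 f4 = 0"
     "br f2 f5 = 0"
     "br f3 f5 = 0"
     "br f4 f5 = 0"
  shows "alg_isomorphic scale br sc5 br_H3K2"
proof (rule iso_basis[where F = "case_idx5 f1 f2 f3 f4 f5"])
  show "indepv 5 (nth [case_idx5 f1 f2 f3 f4 f5 E1, case_idx5 f1 f2 f3 f4 f5 E2,
     case_idx5 f1 f2 f3 f4 f5 E3, case_idx5 f1 f2 f3 f4 f5 E4, case_idx5 f1 f2 f3 f4 f5 E5])"
    using ind by simp
  show "br_H3K2 x y k = (\<Sum>i\<in>UNIV. \<Sum>j\<in>UNIV. x i * y j * br_H3K2 (unitv i) (unitv j) k)" for x y k
    by (cases k) (simp_all add: sum_idx5 br_H3K2_def unitv_def algebra_simps)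
  have r: "br f2 f1 = - f3"
     "br f4 f3 = 0"
     "br f3 f1 = 0"
     "br f4 f1 = 0"
     "br f5 f1 = 0"
     "br f3 f2 = 0"
     "br f4 f2 = 0"
     "br f5 f2 = 0"
     "br f5 f3 = 0"
     "br f5 f4 = 0"
    using h by (metis anti neg_0_equal_iff_equal minus_minus)+
  show "br (case_idx5 f1 f2 f3 f4 f5 i) (case_idx5 f1 f2 f3 f4 f5 j) =
    (\<Sum>k\<in>UNIV. br_H3K2 (unitv i) (unitv j) k *s case_idx5 f1 f2 f3 f4 f5 k)" for i j
    by (cases i; cases j) (simp_all add: sum_idx5 br_H3K2_def unitv_def h r)
qed

lemma iso_L52:
  assumes ind: "indepv 5 (nth [f1,f2,f3,f4,f5])"
  and h: "br f1 f2 = f3"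
     "br f3 f4 = 0"
     "br f1 f3 = 0"
     "br f1 f4 = f5"
     "br f1 f5 = 0"
     "br f2 f3 = 0"
     "br f2 f4 = 0"
     "br f2 f5 = 0"
     "br f3 f5 = 0"
     "br f4 f5 = 0"
  shows "alg_isomorphic scale br sc5 br_L52"
proof (rule iso_basis[where F = "case_idx5 f1 f2 f3 f4 f5"])
  show "indepv 5 (nth [case_idx5 f1 f2 f3 f4 f5 E1, case_idx5 f1 f2 f3 f4 f5 E2,
     case_idx5 f1 f2 f3 f4 f5 E3, case_idx5 f1 f2 f3 f4 f5 E4, case_idx5 f1 f2 f3 f4 f5 E5])"
    using ind by simp
  show "br_L52 x y k = (\<Sum>i\<in>UNIV. \<Sum>j\<in>UNIV. x i * y j * br_L52 (unitv i) (unitv j) k)" for x y k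
    by (cases k) (simp_all add: sum_idx5 br_L52_def unitv_def algebra_simps)
  have r: "br f2 f1 = - f3"
     "br f4 f3 = 0"
     "br f3 f1 = 0"
     "br f4 f1 = - f5"
     "br f5 f1 = 0"
     "br f3 f2 = 0"
     "br f4 f2 = 0"
     "br f5 f2 = 0"
     "br f5 f3 = 0"
     "br f5 f4 = 0"
    using h by (metis anti neg_0_equal_iff_equal minus_minus)+
  show "br (case_idx5 f1 f2 f3 f4 f5 i) (case_idx5 f1 f2 f3 f4 f5 j) =
    (\<Sum>k\<in>UNIV. br_L52 (unitv i) (unitv j) k *s case_idx5 f1 f2 f3 f4 f5 k)" for i j
    by (cases i; cases j) (simp_all add: sum_idx5 br_L52_def unitv_def h r)
qed


end

context acaa5 begin

lemma nil2[simp]: "br x (br y z) = 0"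
proof (rule ccontr)
  assume t0: "br x (br y z) \<noteq> 0"
  define t where "t = br x (br y z)"
  define u1 where "u1 = br y z"
  define u2 where "u2 = br z x"
  define u3 where "u3 = br x y"
  have tn: "t \<noteq> 0" using t0 t_def by simp
  have f1: "br u1 x = - t" "br u1 y = 0" "br u1 z = 0" "br u1 u1 = 0" "br u1 u2 = 0" "br u1 t = 0"
    unfolding t_def u1_def u2_def by (simp_all add: anti[of "br y z"])
  have f2: "br u2 x = 0" "br u2 y = - t" "br u2 z = 0" "br u2 u1 = 0" "br u2 u2 = 0" "br u2 t = 0"
    unfolding t_def u1_def u2_def by (simp_all add: anti[of "br z x"] cyc[of x y z])
  have f3: "br u3 x = 0" "br u3 y = 0" "br u3 z = - t" "br u3 u1 = 0" "br u3 u2 = 0" "br u3 t = 0"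
    unfolding t_def u1_def u2_def u3_def by (simp_all add: anti[of "br x y"] K[of x y z])
  have f4: "br x x = 0" "br x u1 = t" "br x u2 = 0" "br x t = 0"
    "br y u1 = 0" "br y u2 = t" "br y t = 0"
    unfolding t_def u1_def u2_def by (simp_all add: cyc[of x y z])
  have "indepv 6 (nth [x,y,z,u1,u2,t])"
    unfolding indep6_iff
  proof (intro allI impI)
    fix a b c d e f assume R: "a*s x + b*s y + c*s z + d*s u1 + e*s u2 + f*s t = 0"
    have "br u1 (a*s x + b*s y + c*s z + d*s u1 + e*s u2 + f*s t) = 0" using R by simp
    hence a0: "a = 0" using tn by (simp add: bsimps f1)
    have "br u2 (a*s x + b*s y + c*s z + d*s u1 + e*s u2 + f*s t) = 0" using R by simp
    hence b0: "b = 0" using tn by (simp add: bsimps f2)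
    have "br u3 (a*s x + b*s y + c*s z + d*s u1 + e*s u2 + f*s t) = 0" using R by simp
    hence c0: "c = 0" using tn by (simp add: bsimps f3)
    have "br x (a*s x + b*s y + c*s z + d*s u1 + e*s u2 + f*s t) = 0" using R by simp
    hence d0: "d = 0" using tn a0 b0 c0 by (simp add: bsimps f4)
    have "br y (a*s x + b*s y + c*s z + d*s u1 + e*s u2 + f*s t) = 0" using R by simp
    hence e0: "e = 0" using tn a0 b0 c0 d0 by (simp add: bsimps f4)
    have "f = 0" using R tn a0 b0 c0 d0 e0 by simp
    thus "a = 0 \<and> b = 0 \<and> c = 0 \<and> d = 0 \<and> e = 0 \<and> f = 0" using a0 b0 c0 d0 e0 by simp
  qed
  thus False by (rule six_false)
qed

lemma nil2'[simp]: "br (br x y) z = 0"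
  using anti[of "br x y" z] by simp

definition pind :: "'v \<Rightarrow> 'v \<Rightarrow> bool" where
  "pind p q \<longleftrightarrow> (\<forall>\<alpha> \<beta>. \<alpha> *s p + \<beta> *s q = 0 \<longrightarrow> \<alpha> = 0 \<and> \<beta> = 0)"

lemma pind_I: assumes "p \<noteq> 0" "\<And>s. q \<noteq> s *s p" shows "pind p q"
  unfolding pind_def
proof (intro allI impI)
  fix \<alpha> \<beta> assume h: "\<alpha> *s p + \<beta> *s q = 0"
  have b: "\<beta> = 0"
  proof (rule ccontr)
    assume "\<beta> \<noteq> 0"
    have "\<beta> *s q = (- \<alpha>) *s p" using h by (simp add: eq_neg_iff_add_eq_0 add.commute)
    hence "(1/\<beta>) *s (\<beta> *s q) = (1/\<beta>) *s ((- \<alpha>) *s p)" by simp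
    hence "q = (- \<alpha> / \<beta>) *s p" using \<open>\<beta> \<noteq> 0\<close> by simp
    thus False using assms(2) by blast
  qed
  thus "\<alpha> = 0 \<and> \<beta> = 0" using h assms(1) by simp
qed

lemma pind_nz: "pind p q \<Longrightarrow> p \<noteq> 0"
  unfolding pind_def by (metis add_0 one_neq_zero scale_zero_left scale_zero_right)
lemma pind_sym: "pind p q \<Longrightarrow> pind q p"
  unfolding pind_def by (metis add.commute)
lemma pind_scale: assumes "pind p q" "s \<noteq> 0" "r \<noteq> 0" shows "pind (s *s p) (r *s q)"
  unfolding pind_def
proof (intro allI impI)
  fix \<alpha> \<beta> assume "\<alpha> *s (s *s p) + \<beta> *s (r *s q) = 0"
  hence "(\<alpha> * s) *s p + (\<beta> * r) *s q = 0" by simp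
  hence "\<alpha> * s = 0 \<and> \<beta> * r = 0" using assms(1) unfolding pind_def by blast
  thus "\<alpha> = 0 \<and> \<beta> = 0" using assms(2,3) by simp
qed

lemma five_from_pind: assumes pq: "pind (br a b) (br a c)"
  shows "indepv 5 (nth [a, b, br a b, c, br a c])"
  unfolding indep5_iff
proof (intro allI impI)
  fix \<alpha> \<beta> \<gamma> \<delta> \<epsilon> assume R: "\<alpha> *s a + \<beta> *s b + \<gamma> *s br a b + \<delta> *s c + \<epsilon> *s br a c = 0"
  have "br a (\<alpha> *s a + \<beta> *s b + \<gamma> *s br a b + \<delta> *s c + \<epsilon> *s br a c) = 0" using R by simp
  hence "\<beta> *s br a b + \<delta> *s br a c = 0" by (simp add: bsimps)
  hence bd: "\<beta> = 0" "\<delta> = 0" using pq unfolding pind_def by blast+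
  have "br b (\<alpha> *s a + \<beta> *s b + \<gamma> *s br a b + \<delta> *s c + \<epsilon> *s br a c) = 0" using R by simp
  hence "\<alpha> *s br b a = 0" using bd by (simp add: bsimps)
  moreover have "br b a = - br a b" by (rule anti)
  ultimately have a0: "\<alpha> = 0" using pind_nz[OF pq] by simp
  hence "\<gamma> *s br a b + \<epsilon> *s br a c = 0" using R bd by simp
  hence "\<gamma> = 0" "\<epsilon> = 0" using pq unfolding pind_def by blast+
  thus "\<alpha> = 0 \<and> \<beta> = 0 \<and> \<gamma> = 0 \<and> \<delta> = 0 \<and> \<epsilon> = 0" using a0 bd by simp
qed

lemma L52_from_pind: assumes pq: "pind (br a b) (br a c)"
  shows "alg_isomorphic scale br sc5 br_L52"
proof -
  define p where "p = br a b"
  define q where "q = br a c"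
  have ind0: "indepv 5 (nth [a, b, p, c, q])" using five_from_pind[OF pq] p_def q_def by simp
  obtain \<alpha> \<beta> \<gamma> \<delta> \<epsilon> where bc: "br b c = \<alpha> *s a + \<beta> *s b + \<gamma> *s p + \<delta> *s c + \<epsilon> *s q"
    using span5[OF ind0] by blast
  have "br a (br b c) = 0" by simp
  hence "\<beta> *s p + \<delta> *s q = 0" unfolding bc by (simp add: bsimps p_def q_def)
  hence bd: "\<beta> = 0" "\<delta> = 0" using pq unfolding pind_def p_def q_def by blast+
  have "br b (br b c) = 0" by simp
  hence "\<alpha> *s br b a = 0" unfolding bc using bd by (simp add: bsimps p_def q_def)
  moreover have "br b a = - p" unfolding p_def by (rule anti)
  ultimately have a0: "\<alpha> = 0" using pind_nz[OF pq] p_def by simp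
  have bc2: "br b c = \<gamma> *s p + \<epsilon> *s q" using bc a0 bd by simp
  define b' where "b' = b - \<epsilon> *s a"
  define c' where "c' = c + \<gamma> *s a"
  have ab': "br a b' = p" unfolding b'_def p_def by (simp add: bsimps)
  have ac': "br a c' = q" unfolding c'_def q_def by (simp add: bsimps)
  have bc': "br b' c' = 0"
  proof -
    have "br b' c' = br b c + \<gamma> *s br b a - \<epsilon> *s br a c - (\<epsilon> * \<gamma>) *s br a a"
      unfolding b'_def c'_def by (simp add: bsimps algebra_simps)
    also have "\<dots> = 0" unfolding bc2 using anti[of b a] by (simp add: p_def q_def)
    finally show ?thesis .
  qed
  have ind: "indepv 5 (nth [a, b', p, c', q])"
    using five_from_pind[of a b' c'] pq ab' ac' p_def q_def by simp
  show ?thesis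
  proof (rule iso_L52[OF ind])
    show "br a b' = p" by (rule ab')
    show "br a c' = q" by (rule ac')
    show "br b' c' = 0" by (rule bc')
    show "br p c' = 0" "br a p = 0" "br a q = 0" "br b' p = 0" "br b' q = 0" "br p q = 0" "br c' q = 0"
      unfolding p_def q_def by simp_all
  qed
qed

end

context acaa5 begin

lemma caseB:
  assumes z: "z = br x1 x2" "z \<noteq> 0"
  and B: "\<And>x y. \<exists>s. br x y = s *s z"
  shows "alg_isomorphic scale br sc5 br_H3K2 \<or> alg_isomorphic scale br sc5 br_H5"
proof -
  have "\<forall>p. \<exists>s. br (fst p) (snd p) = s *s z" using B by simp
  from choice[OF this] obtain f where f: "\<forall>p. br (fst p) (snd p) = f p *s z" by blast
  define om where "om x y = f (x, y)" for x y
  have om: "br x y = om x y *s z" for x y using f[rule_format, of "(x,y)"] om_def by simp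
  have zc: "br z v = 0" "br v z = 0" for v using z by simp_all
  have x21: "br x2 x1 = - z" using z anti[of x2 x1] by simp
  have ind3: "indepv 3 (nth [x1, x2, z])"
    unfolding indep3_iff
  proof (intro allI impI)
    fix a b c assume R: "a *s x1 + b *s x2 + c *s z = 0"
    have "br x1 (a *s x1 + b *s x2 + c *s z) = 0" using R by simp
    hence b0: "b = 0" using z by (simp add: bsimps zc)
    have "br x2 (a *s x1 + b *s x2 + c *s z) = 0" using R by simp
    hence a0: "a = 0" using z by (simp add: bsimps zc x21)
    show "a = 0 \<and> b = 0 \<and> c = 0" using R a0 b0 z by simp
  qed
  obtain w1 w2 where ind5: "indepv 5 (nth [x1, x2, z, w1, w2])" using ext3[OF ind3] by blast
  define w1' where "w1' = w1 - om w1 x2 *s x1 + om w1 x1 *s x2"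
  define w2' where "w2' = w2 - om w2 x2 *s x1 + om w2 x1 *s x2"
  have w1x1: "br w1' x1 = 0" unfolding w1'_def
    using om[of w1 x1] x21 by (simp add: bsimps)
  have w1x2: "br w1' x2 = 0" unfolding w1'_def
    using om[of w1 x2] z by (simp add: bsimps)
  have w2x1: "br w2' x1 = 0" unfolding w2'_def
    using om[of w2 x1] x21 by (simp add: bsimps)
  have w2x2: "br w2' x2 = 0" unfolding w2'_def
    using om[of w2 x2] z by (simp add: bsimps)
  have x1w: "br x1 w1' = 0" "br x2 w1' = 0" "br x1 w2' = 0" "br x2 w2' = 0"
    using w1x1 w1x2 w2x1 w2x2 anti[of x1 w1'] anti[of x2 w1'] anti[of x1 w2'] anti[of x2 w2'] by simp_all
  have ind: "indepv 5 (nth [x1, x2, z, w1', w2'])"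
    unfolding indep5_iff
  proof (intro allI impI)
    fix a b c d e assume R: "a *s x1 + b *s x2 + c *s z + d *s w1' + e *s w2' = 0"
    have eq: "a *s x1 + b *s x2 + c *s z + d *s w1' + e *s w2' =
      (a - d * om w1 x2 - e * om w2 x2) *s x1 + (b + d * om w1 x1 + e * om w2 x1) *s x2 + c *s z + d *s w1 + e *s w2"
      unfolding w1'_def w2'_def by (simp add: algebra_simps scale_right_diff_distrib scale_left_diff_distrib)
    have "(a - d * om w1 x2 - e * om w2 x2) *s x1 + (b + d * om w1 x1 + e * om w2 x1) *s x2 + c *s z + d *s w1 + e *s w2 = 0"
      using R eq by simp
    note H = ind5[unfolded indep5_iff, rule_format, OF this]
    hence "d = 0" "e = 0" "c = 0" by simp_all
    with H show "a = 0 \<and> b = 0 \<and> c = 0 \<and> d = 0 \<and> e = 0" by simp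
  qed
  define c' where "c' = om w1' w2'"
  have ww: "br w1' w2' = c' *s z" unfolding c'_def by (rule om)
  show ?thesis
  proof (cases "c' = 0")
    case True
    have "alg_isomorphic scale br sc5 br_H3K2"
      by (rule iso_H3K2[OF ind]) (use z x1w ww True zc in simp_all)
    thus ?thesis by blast
  next
    case False
    define w3 where "w3 = (1 / c') *s w2'"
    have ind': "indepv 5 (nth [x1, x2, w1', w3, z])"
      unfolding indep5_iff
    proof (intro allI impI)
      fix a b c d e assume R: "a *s x1 + b *s x2 + c *s w1' + d *s w3 + e *s z = 0"
      have "a *s x1 + b *s x2 + e *s z + c *s w1' + (d / c') *s w2' = 0"
        using R unfolding w3_def by (simp add: algebra_simps)
      note H = ind[unfolded indep5_iff, rule_format, OF this]
      thus "a = 0 \<and> b = 0 \<and> c = 0 \<and> d = 0 \<and> e = 0" using False by simp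
    qed
    have "alg_isomorphic scale br sc5 br_H5"
    proof (rule iso_H5[OF ind'])
      show "br w1' w3 = z" unfolding w3_def using ww False by (simp add: bsimps)
    qed (use z x1w zc in \<open>simp_all add: w3_def bsimps\<close>)
    thus ?thesis by blast
  qed
qed

end

context acaa5 begin

lemma pind_I': assumes "z \<noteq> 0" "\<And>s. q \<noteq> s *s z" shows "pind (- z) q"
proof (rule pind_I)
  show "- z \<noteq> 0" using assms(1) by simp
  fix s show "q \<noteq> s *s (- z)" using assms(2)[of "- s"] by simp
qed

lemma caseC:
  assumes z: "z = br x1 x2" "z \<noteq> 0"
  and C: "\<And>s. br y1 y2 \<noteq> s *s z"
  shows "alg_isomorphic scale br sc5 br_L52"
proof -
  define u where "u = br y1 y2"
  have zu: "pind z u" using pind_I[OF z(2)] C u_def by blast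
  have x21: "br x2 x1 = - z" using z anti[of x2 x1] by simp
  have y21: "br y2 y1 = - u" using u_def anti[of y2 y1] by simp
  show ?thesis
  proof (cases "\<exists>s. br x1 y1 = s *s z")
    case False
    thus ?thesis using L52_from_pind[of x1 x2 y1] pind_I[OF z(2)] z by blast
  next
    case True
    then obtain s11 where s11: "br x1 y1 = s11 *s z" by blast
    show ?thesis
    proof (cases "\<exists>s. br x1 y2 = s *s z")
      case False
      thus ?thesis using L52_from_pind[of x1 x2 y2] pind_I[OF z(2)] z by blast
    next
      case True
      then obtain s12 where s12: "br x1 y2 = s12 *s z" by blast
      show ?thesis
      proof (cases "\<exists>s. br x2 y1 = s *s z")
        case False
        thus ?thesis using L52_from_pind[of x2 x1 y1] pind_I'[OF z(2)] x21 by metis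
      next
        case True
        then obtain s21 where s21: "br x2 y1 = s21 *s z" by blast
        show ?thesis
        proof (cases "\<exists>s. br x2 y2 = s *s z")
          case False
          thus ?thesis using L52_from_pind[of x2 x1 y2] pind_I'[OF z(2)] x21 by metis
        next
          case True
          then obtain s22 where s22: "br x2 y2 = s22 *s z" by blast
          have uz: "pind u z" using zu by (rule pind_sym)
          have r11: "br y1 x1 = (- s11) *s z" using s11 anti[of y1 x1] by simp
          have r12: "br y2 x1 = (- s12) *s z" using s12 anti[of y2 x1] by simp
          have r21: "br y1 x2 = (- s21) *s z" using s21 anti[of y1 x2] by simp
          have r22: "br y2 x2 = (- s22) *s z" using s22 anti[of y2 x2] by simp
          show ?thesis
          proof (cases "s11 \<noteq> 0")
            case True
            have "pind (1 *s u) ((- s11) *s z)" using pind_scale[OF uz, of 1 "- s11"] True by simp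
            thus ?thesis using L52_from_pind[of y1 y2 x1] r11 u_def by simp
          next
            case s11z: False
            show ?thesis
            proof (cases "s21 \<noteq> 0")
              case True
              have "pind (1 *s u) ((- s21) *s z)" using pind_scale[OF uz, of 1 "- s21"] True by simp
              thus ?thesis using L52_from_pind[of y1 y2 x2] r21 u_def by simp
            next
              case s21z: False
              show ?thesis
              proof (cases "s12 \<noteq> 0")
                case True
                have "pind ((- 1) *s u) ((- s12) *s z)" using pind_scale[OF uz, of "- 1" "- s12"] True by simp
                thus ?thesis using L52_from_pind[of y2 y1 x1] r12 y21 by simp
              next
                case s12z: False
                show ?thesis
                proof (cases "s22 \<noteq> 0")
                  case True
                  have "pind ((- 1) *s u) ((- s22) *s z)" using pind_scale[OF uz, of "- 1" "- s22"] True by simp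
                  thus ?thesis using L52_from_pind[of y2 y1 x2] r22 y21 by simp
                next
                  case s22z: False
                  have zc: "br z v = 0" "br v z = 0" "br u v = 0" "br v u = 0" for v
                    using z u_def by simp_all
                  have b0: "br x1 y1 = 0" "br x1 y2 = 0" "br x2 y1 = 0" "br x2 y2 = 0"
                    "br y1 x1 = 0" "br y1 x2 = 0" "br y2 x1 = 0" "br y2 x2 = 0"
                    using s11 s12 s21 s22 r11 r12 r21 r22 s11z s12z s21z s22z by simp_all
                  have "indepv 6 (nth [x1, x2, y1, y2, z, u])"
                    unfolding indep6_iff
                  proof (intro allI impI)
                    fix a b c d e f assume R: "a*s x1 + b*s x2 + c*s y1 + d*s y2 + e*s z + f*s u = 0"
                    have "br x1 (a*s x1 + b*s x2 + c*s y1 + d*s y2 + e*s z + f*s u) = 0" using R by simp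
                    hence bb: "b = 0" using z by (simp add: bsimps b0 zc)
                    have "br x2 (a*s x1 + b*s x2 + c*s y1 + d*s y2 + e*s z + f*s u) = 0" using R by simp
                    hence aa: "a = 0" using z by (simp add: bsimps b0 zc x21)
                    have "br y1 (a*s x1 + b*s x2 + c*s y1 + d*s y2 + e*s z + f*s u) = 0" using R by simp
                    hence dd: "d = 0" using zu pind_nz[OF uz] u_def by (simp add: bsimps b0 zc)
                    have "br y2 (a*s x1 + b*s x2 + c*s y1 + d*s y2 + e*s z + f*s u) = 0" using R by simp
                    hence cc: "c = 0" using pind_nz[OF uz] by (simp add: bsimps b0 zc y21)
                    have "e *s z + f *s u = 0" using R aa bb cc dd by simp
                    hence "e = 0" "f = 0" using zu unfolding pind_def by blast+
                    thus "a = 0 \<and> b = 0 \<and> c = 0 \<and> d = 0 \<and> e = 0 \<and> f = 0" using aa bb cc dd by simp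
                  qed
                  thus ?thesis using six_false by blast
                qed
              qed
            qed
          qed
        qed
      qed
    qed
  qed
qed

theorem classify:
  "alg_isomorphic scale br sc5 br_abelian \<or> alg_isomorphic scale br sc5 br_H3K2 \<or>
   alg_isomorphic scale br sc5 br_L52 \<or> alg_isomorphic scale br sc5 br_H5"
proof (cases "\<forall>x y. br x y = 0")
  case True
  obtain v1 v2 v3 v4 v5 where "indepv 5 (nth [v1,v2,v3,v4,v5])" using ext0 by blast
  hence "alg_isomorphic scale br sc5 br_abelian" by (rule iso_ab) (use True in simp_all)
  thus ?thesis by blast
next
  case False
  then obtain x1 x2 where nz: "br x1 x2 \<noteq> 0" by blast
  show ?thesis
  proof (cases "\<forall>x y. \<exists>s. br x y = s *s br x1 x2")
    case True
    thus ?thesis using caseB[OF refl nz] by blast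
  next
    case False
    then obtain y1 y2 where "\<And>s. br y1 y2 \<noteq> s *s br x1 x2" by blast
    thus ?thesis using caseC[OF refl nz] by blast
  qed
qed

end

theorem mainTheorem5:
  fixes sc :: "'k::field_char_0 \<Rightarrow> 'v::ab_group_add \<Rightarrow> 'v"
    and br :: "'v \<Rightarrow> 'v \<Rightarrow> 'v"
  assumes "acaa_algebra sc br"
    and "vector_space.dim sc (UNIV :: 'v set) = 5"
  shows "alg_isomorphic sc br sc5 br_abelian \<or>
         alg_isomorphic sc br sc5 br_H3K2 \<or>
         alg_isomorphic sc br sc5 br_L52 \<or>
         alg_isomorphic sc br sc5 br_H5"
proof -
  have vs: "vector_space sc" and lin: "\<And>x. Vector_Spaces.linear sc sc (br x)"
    and an: "\<And>x y. br x y = - br y x"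
    and cy: "\<And>x1 x2 x3. br x1 (br x2 x3) = br x2 (br x3 x1)"
    using assms(1) unfolding acaa_algebra_def by blast+
  interpret acaa5 sc br
  proof (unfold_locales)
    show "sc a (x + y) = sc a x + sc a y" for a x y using vs by (simp add: vector_space.vector_space_assms(1))
    show "sc (a + b) x = sc a x + sc b x" for a b x using vs by (simp add: vector_space.vector_space_assms(2))
    show "sc a (sc b x) = sc (a * b) x" for a b x using vs by (simp add: vector_space.vector_space_assms(3))
    show "sc 1 x = x" for x using vs by (simp add: vector_space.vector_space_assms(4))
    show "br x (y + z) = br x y + br x z" for x y z using lin[of x] unfolding Vector_Spaces.linear_iff by blast
    show "br x (sc a y) = sc a (br x y)" for x a y using lin[of x] unfolding Vector_Spaces.linear_iff by blast
    show "br x y = - br y x" for x y by (rule an)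
    show "br x1 (br x2 x3) = br x2 (br x3 x1)" for x1 x2 x3 by (rule cy)
    show "vector_space.dim sc (UNIV :: 'v set) = 5" by (rule assms(2))
  qed
  show ?thesis by (rule classify)
qed

end
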